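(* Assume (H-tree). For every $r\in(0,1)$ there exist constants $C=C_r>0$ and $c=c_r>0$ such that for all $n\ge1$, \[ \mathbf P\big(\#(\widehat{\mathcal T}_-[0,n]\cap\mathcal X)>rn\big)\le C e^{-cn}, \] where $\widehat{\mathcal T}_-[0,n]=\{\widehat{\mathcal T}_-(0),\dots,\widehat{\mathcal T}_-(n)\}$.
   Context: (H-tree): $\mu$ is a probability distribution on $\mathbb N$ with mean $1$ and variance $\sigma^2\in(0,\infty)$. Invariant tree: take an infinite spine $\mathcal X=\{\varnothing_0=\varnothing,\varnothing_1,\varnothing_2,\dots\}$ with edges $\{\varnothing_n,\varnothing_{n+1}\}$. Independently, for each $n\ge1$, with probability $\mu(i+j+1)$ the vertex $\varnothing_n$ receives $i$ extra children on the left and $j$ extra children on the right of the spine, each the root of an independent Galton–Watson tree with offspring law $\mu$; let $\mathcal T^g_n$ (resp. $\mathcal T^d_n$) be the planar tree rooted at $\varnothing_n$ formed by $\varnothing_n$ and its left (resp. right) extra children with their descendants. Also $\mathcal T^d_0$ is an independent Galton–Watson($\mu$) tree rooted at $\varnothing_0$ and $\mathcal T^g_0=\{\varnothing_0\}$. The tree $\widehat{\mathcal T}_-$ is the union of the spine and all $\mathcal T^g_n$, enumerated as follows: $\widehat{\mathcal T}_-(0)=\varnothing_0$, $\widehat{\mathcal T}_-(1)=\varnothing_1$, then the vertices of $\mathcal T^g_1\setminus\{\varnothing_1\}$ in depth-first order, then $\varnothing_2$, then the vertices of $\mathcal T^g_2\setminus\{\varnothing_2\}$ in depth-first order, and so on.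 $\mathbf P$ denotes the law of this random tree. *)

theory Defs
  imports "HOL-Probability.Probability" "HOL-Library.Extended_Nat"
begin

text \<open>Planar (Ulam-Harris) Galton-Watson tree built from offspring numbers
  xi w attached to every label w (a list of child indices).\<close>
inductive_set gw_tree :: "(nat list \<Rightarrow> nat) \<Rightarrow> nat list set" for xi where
  gw_root: "[] \<in> gw_tree xi"
| gw_child: "w \<in> gw_tree xi \<Longrightarrow> m < xi w \<Longrightarrow> w @ [m] \<in> gw_tree xi"

definition esize :: "'a set \<Rightarrow> enat" where
  "esize A = (if finite A then enat (card A) else \<infinity>)"

text \<open>The left tree T^g_n rooted at the spine vertex with index n (n \<ge> 1):
  root [] plus, for each left extra child m < (number of left children),
  a Galton-Watson tree with offspring numbers xi n m.\<close>
definition left_tree :: "(nat \<Rightarrow> nat \<times> nat) \<Rightarrow> (nat \<Rightarrow> nat \<Rightarrow> nat list \<Rightarrow> nat) \<Rightarrow> nat \<Rightarrow> nat list set"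
  where "left_tree LR xi n =
     insert [] {m # w | m w. m < fst (LR n) \<and> w \<in> gw_tree (xi n m)}"

text \<open>Position of the spine vertex with index k in the enumeration of the tree
  T_-: position 0 for the spine root, and for k \<ge> 1 it is
  k + sum over i=1..k-1 of (|T^g_i| - 1)  (infinite if some earlier left tree is infinite).\<close>
fun spine_pos :: "(nat \<Rightarrow> nat \<times> nat) \<Rightarrow> (nat \<Rightarrow> nat \<Rightarrow> nat list \<Rightarrow> nat) \<Rightarrow> nat \<Rightarrow> enat" where
  "spine_pos LR xi 0 = 0"
| "spine_pos LR xi (Suc k) =
     enat (Suc k) + (\<Sum>i\<in>{1..k}. esize (left_tree LR xi i) - 1)"

text \<open>Number of spine vertices among the first n+1 enumerated vertices
  T_-(0),...,T_-(n).\<close>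
definition spine_count :: "(nat \<Rightarrow> nat \<times> nat) \<Rightarrow> (nat \<Rightarrow> nat \<Rightarrow> nat list \<Rightarrow> nat) \<Rightarrow> nat \<Rightarrow> nat" where
  "spine_count LR xi n = card {k. spine_pos LR xi k \<le> enat n}"

end

theory Submission
  imports Defs
begin



definition inT :: "(nat list \<Rightarrow> nat) \<Rightarrow> nat list \<Rightarrow> bool" where
  "inT \<xi> w \<longleftrightarrow> (\<forall>j<length w. w!j < \<xi> (take j w))"

lemma inT_Nil[simp]: "inT \<xi> []" by (simp add: inT_def)

lemma inT_snoc: "inT \<xi> (w@[m]) \<longleftrightarrow> inT \<xi> w \<and> m < \<xi> w"
  unfolding inT_def
  apply (auto simp: nth_append less_Suc_eq)
  done

lemma gw_tree_iff: "w \<in> gw_tree \<xi> \<longleftrightarrow> inT \<xi> w"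
proof
  assume "w \<in> gw_tree \<xi>" then show "inT \<xi> w"
    by induction (auto simp: inT_snoc)
next
  assume "inT \<xi> w" then show "w \<in> gw_tree \<xi>"
    by (induction w rule: rev_induct) (auto simp: inT_snoc intro: gw_tree.intros)
qed

lemma inT_cong: "(\<And>j. j < length w \<Longrightarrow> \<xi> (take j w) = \<xi>' (take j w)) \<Longrightarrow> inT \<xi> w = inT \<xi>' w"
  unfolding inT_def by auto

definition Wl :: "nat \<Rightarrow> nat \<Rightarrow> nat list set" where
  "Wl d B = {w. length w = d \<and> set w \<subseteq> {..<B}}"
definition Wall :: "nat \<Rightarrow> nat \<Rightarrow> nat list set" where
  "Wall D B = {w. length w \<le> D \<and> set w \<subseteq> {..<B}}"

lemma finite_Wl: "finite (Wl d B)"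
  unfolding Wl_def using finite_lists_length_eq[of "{..<B}" d] by (simp add: conj_commute)

lemma Wall_UN: "Wall D B = (\<Union>d\<in>{..D}. Wl d B)"
  unfolding Wall_def Wl_def by auto

lemma finite_Wall: "finite (Wall D B)"
  unfolding Wall_UN using finite_Wl by auto

lemma Nil_Wall: "[] \<in> Wall D B" by (simp add: Wall_def)

lemma Wl_Suc: "Wl (Suc d) B = (\<lambda>(m,w). m # w) ` ({..<B} \<times> Wl d B)"
  unfolding Wl_def
  apply (auto simp: length_Suc_conv image_iff)
  done

lemma sum_rho: fixes t :: "nat \<Rightarrow> real" shows "(\<Sum>w\<in>Wl d B. prod_list (map t w)) = (\<Sum>m<B. t m) ^ d"
proof (induction d)
  case 0
  have "Wl 0 B = {[]}" by (auto simp: Wl_def)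
  then show ?case by simp
next
  case (Suc d)
  have inj: "inj_on (\<lambda>(m,w). m # w) ({..<B} \<times> Wl d B)" by (auto simp: inj_on_def)
  have "(\<Sum>w\<in>Wl (Suc d) B. prod_list (map t w)) = (\<Sum>(m,w)\<in>{..<B} \<times> Wl d B. t m * prod_list (map t w))"
    unfolding Wl_Suc by (subst sum.reindex[OF inj]) (simp add: case_prod_unfold)
  also have "\<dots> = (\<Sum>m<B. t m) * (\<Sum>w\<in>Wl d B. prod_list (map t w))"
    by (simp add: sum.cartesian_product[symmetric] sum_product)
  finally show ?case using Suc by simp
qed

lemma sum_rho_all: fixes t :: "nat \<Rightarrow> real" shows "(\<Sum>w\<in>Wall D B. prod_list (map t w)) = (\<Sum>d\<le>D. (\<Sum>m<B. t m) ^ d)"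
proof -
  have "(\<Sum>w\<in>Wall D B. prod_list (map t w)) = (\<Sum>d\<le>D. \<Sum>w\<in>Wl d B. prod_list (map t w))"
    unfolding Wall_UN
    by (rule sum.UNION_disjoint) (auto simp: finite_Wl[unfolded Wl_def] Wl_def)
  then show ?thesis by (simp add: sum_rho)
qed

lemma prefix_Wall: "w \<in> Wall D B \<Longrightarrow> j < length w \<Longrightarrow> take j w \<in> Wall D B"
  unfolding Wall_def using set_take_subset[of j w] by auto




definition Ydet :: "nat \<Rightarrow> nat \<Rightarrow> (nat \<Rightarrow> nat \<times> nat) \<Rightarrow> (nat \<Rightarrow> nat \<Rightarrow> nat list \<Rightarrow> nat) \<Rightarrow> nat \<Rightarrow> nat" where
  "Ydet D B LR' xi' i = (if 1 \<le> fst (LR' i) then card {w\<in>Wall D B. inT (xi' i 0) w} else 0)"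

lemma Ydet_le: "enat (Ydet D B LR' xi' i) \<le> esize (left_tree LR' xi' i) - 1"
proof (cases "1 \<le> fst (LR' i)")
  case False then show ?thesis by (simp add: Ydet_def zero_enat_def[symmetric])
next
  case True
  let ?S = "{w\<in>Wall D B. inT (xi' i 0) w}"
  have sub: "insert [] ((#) 0 ` ?S) \<subseteq> left_tree LR' xi' i"
    using True by (auto simp: left_tree_def gw_tree_iff)
  show ?thesis
  proof (cases "finite (left_tree LR' xi' i)")
    case False then show ?thesis by (simp add: esize_def)
  next
    case fin: True
    have "card (insert [] ((#) 0 ` ?S)) \<le> card (left_tree LR' xi' i)"
      by (rule card_mono[OF fin sub])
    moreover have "card (insert [] ((#) 0 ` ?S)) = Suc (card ?S)"
    proof -
      have f: "finite ?S" using finite_Wall[of D B] by simp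
      have "[] \<notin> (#) 0 ` ?S" by auto
      then have "card (insert [] ((#) 0 ` ?S)) = Suc (card ((#) 0 ` ?S))"
        using f by (simp add: card_insert_disjoint)
      also have "card ((#) 0 ` ?S) = card ?S" by (simp add: card_image inj_on_def)
      finally show ?thesis .
    qed
    ultimately have "card ?S \<le> card (left_tree LR' xi' i) - 1" by simp
    then show ?thesis using True fin by (simp add: esize_def Ydet_def one_enat_def)
  qed
qed

lemma spine_pos_ge: "enat k \<le> spine_pos LR' xi' k"
  by (cases k) (auto simp: zero_enat_def[symmetric])

lemma spine_pos_Suc_mono: "spine_pos LR' xi' k \<le> spine_pos LR' xi' (Suc k)"
proof (cases k)
  case 0 then show ?thesis by simp
next
  case (Suc k')
  have "(\<Sum>i\<in>{1..Suc k'}. esize (left_tree LR' xi' i) - 1) =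
        (\<Sum>i\<in>{1..k'}. esize (left_tree LR' xi' i) - 1) + (esize (left_tree LR' xi' (Suc k')) - 1)"
    by (simp add: sum.cl_ivl_Suc)
  then show ?thesis using Suc
    by (simp add: add_mono add_increasing2)
qed

lemma spine_pos_mono: "k \<le> k' \<Longrightarrow> spine_pos LR' xi' k \<le> spine_pos LR' xi' k'"
  using lift_Suc_mono_le[of "spine_pos LR' xi'", OF spine_pos_Suc_mono] by blast

lemma nat_floor_bounds:
  fixes x :: real assumes "0 \<le> x"
  shows "real (nat \<lfloor>x\<rfloor>) \<le> x" "x - 1 \<le> real (nat \<lfloor>x\<rfloor>)"
proof -
  have z: "0 \<le> \<lfloor>x\<rfloor>" using assms by simp
  then have e: "real (nat \<lfloor>x\<rfloor>) = real_of_int \<lfloor>x\<rfloor>" by simp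
  show "real (nat \<lfloor>x\<rfloor>) \<le> x" unfolding e by (rule of_int_floor_le)
  show "x - 1 \<le> real (nat \<lfloor>x\<rfloor>)" unfolding e using real_of_int_floor_gt_diff_one[of x] by linarith
qed

lemma det:
  assumes "real (spine_count LR' xi' n) > r * real n" and r0: "0 \<le> r"
  shows "real (\<Sum>i\<in>{1..nat\<lfloor>r*n\<rfloor> - 1}. Ydet D B LR' xi' i) \<le> real n - real (nat \<lfloor>r*n\<rfloor>)"
proof -
  define K where "K = nat \<lfloor>r*n\<rfloor>"
  define S where "S = {k. spine_pos LR' xi' k \<le> enat n}"
  have Ssub: "S \<subseteq> {..n}"
    using spine_pos_ge[of _ LR' xi'] by (auto simp: S_def) (meson enat_ord_simps(1) order_trans)
  have "\<exists>k\<in>S. K \<le> k"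
  proof (rule ccontr)
    assume "\<not> ?thesis"
    then have "S \<subseteq> {..<K}" by auto
    then have "card S \<le> K" using card_mono[of "{..<K}" S] by simp
    moreover have "real K \<le> r * n" unfolding K_def
      using r0 by (intro nat_floor_bounds) simp
    ultimately show False using assms by (simp add: spine_count_def S_def[symmetric])
  qed
  then obtain k where k: "k \<in> S" "K \<le> k" by auto
  have posK: "spine_pos LR' xi' K \<le> enat n"
    using spine_pos_mono[OF k(2), of LR' xi'] k(1) by (auto simp: S_def)
  show ?thesis
  proof (cases K)
    case 0 then show ?thesis by (simp add: K_def[symmetric])
  next
    case (Suc k')
    have "(\<Sum>i\<in>{1..k'}. enat (Ydet D B LR' xi' i)) \<le> (\<Sum>i\<in>{1..k'}. esize (left_tree LR' xi' i) - 1)"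
      by (rule sum_mono) (rule Ydet_le)
    moreover have "(\<Sum>i\<in>{1..k'}. enat (Ydet D B LR' xi' i)) = enat (\<Sum>i\<in>{1..k'}. Ydet D B LR' xi' i)"
      by (simp flip: of_nat_eq_enat)
    ultimately have "enat (Suc k') + enat (\<Sum>i\<in>{1..k'}. Ydet D B LR' xi' i) \<le> enat n"
      using posK Suc by (metis add_left_mono order_trans spine_pos.simps(2))
    then have "enat (Suc k' + (\<Sum>i\<in>{1..k'}. Ydet D B LR' xi' i)) \<le> enat n"
      by (simp only: plus_enat_simps(1))
    then have "Suc k' + (\<Sum>i\<in>{1..k'}. Ydet D B LR' xi' i) \<le> n"
      by (simp only: enat_ord_simps(1))
    then have "real (Suc k' + (\<Sum>i\<in>{1..k'}. Ydet D B LR' xi' i)) \<le> real n"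
      by (simp only: of_nat_le_iff)
    then show ?thesis using Suc unfolding K_def[symmetric] by (simp only: of_nat_add) simp
  qed
qed




lemma PiM_count_all_sets:
  fixes K :: "'i set"
  assumes fin: "finite K" and A: "A \<subseteq> space (PiM K (\<lambda>_. count_space (UNIV::'v::countable set)))"
  shows "A \<in> sets (PiM K (\<lambda>_. count_space (UNIV::'v set)))"
proof -
  have sp: "space (PiM K (\<lambda>_. count_space (UNIV::'v set))) = PiE K (\<lambda>_. UNIV)" by (simp add: space_PiM)
  have c: "countable A"
    using countable_subset[OF A] sp countable_PiE[OF fin, of "\<lambda>_. UNIV::'v set"] by auto
  have eq: "A = (\<Union>x\<in>A. PiE K (\<lambda>i. {x i}))"
  proof
    show "A \<subseteq> (\<Union>x\<in>A. PiE K (\<lambda>i. {x i}))"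
    proof
      fix x assume "x \<in> A"
      then have "x \<in> PiE K (\<lambda>_. UNIV)" using A sp by auto
      then have "x \<in> PiE K (\<lambda>i. {x i})" by (auto simp: PiE_iff)
      then show "x \<in> (\<Union>x\<in>A. PiE K (\<lambda>i. {x i}))" using \<open>x\<in>A\<close> by blast
    qed
  next
    show "(\<Union>x\<in>A. PiE K (\<lambda>i. {x i})) \<subseteq> A"
    proof
      fix y assume "y \<in> (\<Union>x\<in>A. PiE K (\<lambda>i. {x i}))"
      then obtain x where x: "x \<in> A" "y \<in> PiE K (\<lambda>i. {x i})" by blast
      then have "x \<in> PiE K (\<lambda>_. UNIV)" using A sp by auto
      then have "y = x" using x(2) by (auto simp: PiE_iff extensional_def fun_eq_iff)
      then show "y \<in> A" using x by simp
    qed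
  qed
  have "(\<Union>x\<in>A. PiE K (\<lambda>i. {x i})) \<in> sets (PiM K (\<lambda>_. count_space (UNIV::'v set)))"
    using c fin by (intro sets.countable_UN') (auto intro!: sets_PiM_I_countable countable_finite)
  then show ?thesis using eq by simp
qed

lemma PiM_count_measurable:
  fixes K :: "'i set"
  assumes fin: "finite K" and g: "g \<in> space (PiM K (\<lambda>_. count_space (UNIV::'v::countable set))) \<rightarrow> space N"
  shows "g \<in> measurable (PiM K (\<lambda>_. count_space (UNIV::'v set))) N"
  unfolding measurable_def using g by (auto intro!: PiM_count_all_sets[OF fin])

context prob_space begin

lemma block_rv:
  fixes X :: "'i \<Rightarrow> 'a \<Rightarrow> 'v::countable"
  assumes ind: "indep_vars (\<lambda>_. count_space UNIV) X I" and fin: "finite K" and KI: "K \<subseteq> I"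
    and g: "g \<in> space (PiM K (\<lambda>_. count_space (UNIV::'v set))) \<rightarrow> space N"
  shows "(\<lambda>\<omega>. g (restrict (\<lambda>i. X i \<omega>) K)) \<in> measurable M N"
proof -
  have X: "\<And>i. i \<in> K \<Longrightarrow> X i \<in> measurable M (count_space UNIV)"
    using ind KI unfolding indep_vars_def by auto
  show ?thesis
    by (rule measurable_compose[OF measurable_restrict[OF X] PiM_count_measurable[OF fin g]])
qed

lemma block_sets:
  fixes X :: "'i \<Rightarrow> 'a \<Rightarrow> 'v::countable"
  assumes ind: "indep_vars (\<lambda>_. count_space UNIV) X I" and fin: "finite K" and KI: "K \<subseteq> I"
  shows "{\<omega>\<in>space M. P (restrict (\<lambda>i. X i \<omega>) K)} \<in> events"
proof -
  have "(\<lambda>\<omega>. P (restrict (\<lambda>i. X i \<omega>) K)) \<in> measurable M (count_space UNIV)"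
    by (rule block_rv[OF ind fin KI]) auto
  then show ?thesis by (simp add: pred_def)
qed

lemma block_indep_prob:
  fixes X :: "'i \<Rightarrow> 'a \<Rightarrow> 'v::countable"
  assumes ind: "indep_vars (\<lambda>_. count_space UNIV) X I" and finA: "finite A" and finB: "finite B"
    and AB: "A \<inter> B = {}" "A \<subseteq> I" "B \<subseteq> I"
  shows "prob {\<omega>\<in>space M. P (restrict (\<lambda>i. X i \<omega>) A) \<and> Q (restrict (\<lambda>i. X i \<omega>) B)} =
         prob {\<omega>\<in>space M. P (restrict (\<lambda>i. X i \<omega>) A)} * prob {\<omega>\<in>space M. Q (restrict (\<lambda>i. X i \<omega>) B)}"
proof -
  let ?MA = "PiM A (\<lambda>_. count_space (UNIV::'v set))"
  let ?MB = "PiM B (\<lambda>_. count_space (UNIV::'v set))"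
  let ?XA = "{f\<in>space ?MA. P f}" and ?XB = "{f\<in>space ?MB. Q f}"
  have iv: "indep_var ?MA (\<lambda>\<omega>. restrict (\<lambda>i. X i \<omega>) A) ?MB (\<lambda>\<omega>. restrict (\<lambda>i. X i \<omega>) B)"
    by (rule indep_var_restrict[OF ind AB])
  have sA: "?XA \<in> sets ?MA" by (rule PiM_count_all_sets[OF finA]) auto
  have sB: "?XB \<in> sets ?MB" by (rule PiM_count_all_sets[OF finB]) auto
  have e1: "(\<lambda>x. (restrict (\<lambda>i. X i x) A, restrict (\<lambda>i. X i x) B)) -` (?XA \<times> ?XB) \<inter> space M =
        {\<omega>\<in>space M. P (restrict (\<lambda>i. X i \<omega>) A) \<and> Q (restrict (\<lambda>i. X i \<omega>) B)}"
    by (auto simp: space_PiM)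
  have e2: "(\<lambda>x. restrict (\<lambda>i. X i x) A) -` ?XA \<inter> space M = {\<omega>\<in>space M. P (restrict (\<lambda>i. X i \<omega>) A)}"
    by (auto simp: space_PiM)
  have e3: "(\<lambda>x. restrict (\<lambda>i. X i x) B) -` ?XB \<inter> space M = {\<omega>\<in>space M. Q (restrict (\<lambda>i. X i \<omega>) B)}"
    by (auto simp: space_PiM)
  show ?thesis using indep_varD[OF iv sA sB] unfolding e1 e2 e3 .
qed

end



lemma mu_big:
  fixes mu :: "nat pmf"
  assumes mean: "measure_pmf.expectation mu real = 1"
    and var_pos: "measure_pmf.variance mu real > 0"
  shows "\<exists>k0\<ge>2. pmf mu k0 > 0"
proof (rule ccontr)
  assume "\<not> ?thesis"
  then have z: "\<And>k. k \<ge> 2 \<Longrightarrow> pmf mu k = 0" by (meson not_less pmf_nonneg order.antisym)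
  have sp: "set_pmf mu \<subseteq> {0,1}"
  proof
    fix x assume "x \<in> set_pmf mu"
    then have "pmf mu x \<noteq> 0" by (simp add: set_pmf_iff)
    then have "\<not> x \<ge> 2" using z by auto
    then show "x \<in> {0,1}" by auto
  qed
  have "measure_pmf.expectation mu real = (\<Sum>a\<in>{0,1}. pmf mu a *\<^sub>R real a)"
    by (rule integral_measure_pmf) (use sp in auto)
  then have p1: "pmf mu 1 = 1" using mean by simp
  have "(\<Sum>a\<in>{0,1}. pmf mu a) = 1" by (rule sum_pmf_eq_1) (use sp in auto)
  then have p0: "pmf mu 0 = 0" using p1 by simp
  have "measure_pmf.variance mu real = (\<Sum>a\<in>{0,1}. pmf mu a *\<^sub>R (real a - 1)^2)"
    unfolding mean by (rule integral_measure_pmf) (use sp in auto)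
  then have "measure_pmf.variance mu real = 0" using p0 p1 by simp
  then show False using var_pos by simp
qed

definition tl_mu :: "nat pmf \<Rightarrow> nat \<Rightarrow> real" where
  "tl_mu mu m = 1 - (\<Sum>k\<le>m. pmf mu k)"

definition mB :: "nat pmf \<Rightarrow> nat \<Rightarrow> real" where
  "mB mu B = (\<Sum>m<B. tl_mu mu m)"

lemma tl_mu_prob: "tl_mu mu m = measure_pmf.prob mu {m<..}"
proof -
  have "measure_pmf.prob mu {m<..} = measure_pmf.prob mu (UNIV - {..m})"
    by (rule arg_cong[where f="measure_pmf.prob mu"]) auto
  also have "\<dots> = 1 - measure_pmf.prob mu {..m}"
    by (subst measure_pmf.prob_compl[symmetric]) auto
  also have "measure_pmf.prob mu {..m} = (\<Sum>k\<le>m. pmf mu k)"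
    by (simp add: measure_measure_pmf_finite)
  finally show ?thesis by (simp add: tl_mu_def)
qed

lemma mB_integral: "mB mu B = measure_pmf.expectation mu (\<lambda>k. real (min k B))"
proof -
  have "mB mu B = (\<Sum>m<B. measure_pmf.expectation mu (indicator {m<..}))"
    by (simp add: mB_def tl_mu_prob)
  also have "\<dots> = measure_pmf.expectation mu (\<lambda>k. \<Sum>m<B. indicator {m<..} k)"
    by (subst Bochner_Integration.integral_sum) (auto intro!: measure_pmf.integrable_const_bound[where B=1])
  also have "(\<lambda>k. \<Sum>m<B. (indicator {m<..} k::real)) = (\<lambda>k. real (min k B))"
  proof
    fix k
    have "(\<Sum>m<B. (indicator {m<..} k::real)) = real (card {m\<in>{..<B}. m < k})"
      by (simp add: indicator_def sum.If_cases Int_def conj_commute)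
    also have "{m\<in>{..<B}. m < k} = {..<min k B}" by auto
    finally show "(\<Sum>m<B. (indicator {m<..} k::real)) = real (min k B)" by simp
  qed
  finally show ?thesis .
qed

lemma mB_le1:
  assumes mean: "measure_pmf.expectation mu real = 1"
  shows "mB mu B \<le> 1"
proof -
  have int: "integrable (measure_pmf mu) real"
    using mean not_integrable_integral_eq by fastforce
  have "measure_pmf.expectation mu (\<lambda>k. real (min k B)) \<le> measure_pmf.expectation mu real"
    by (rule integral_mono[OF _ int]) (auto intro!: measure_pmf.integrable_const_bound[where B=B])
  then show ?thesis using mean by (simp add: mB_integral)
qed

lemma mB_lim:
  assumes mean: "measure_pmf.expectation mu real = 1"
  shows "(\<lambda>B. mB mu B) \<longlonglongrightarrow> 1"
proof -
  have int: "integrable (measure_pmf mu) real"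
    using mean not_integrable_integral_eq by fastforce
  have "(\<lambda>B. measure_pmf.expectation mu (\<lambda>k. real (min k B))) \<longlonglongrightarrow> measure_pmf.expectation mu real"
  proof (rule integral_dominated_convergence[where w=real])
    show "AE x in measure_pmf mu. (\<lambda>i. real (min x i)) \<longlonglongrightarrow> real x"
    proof (rule AE_I2)
      fix x :: nat
      have "eventually (\<lambda>i. real (min x i) = real x) sequentially"
        by (rule eventually_sequentiallyI[of x]) simp
      then show "(\<lambda>i. real (min x i)) \<longlonglongrightarrow> real x" by (rule tendsto_eventually)
    qed
  qed (auto simp: int)
  then show ?thesis using mean by (simp add: mB_integral)
qed




locale spineloc =
  fixes mu :: "nat pmf" and M :: "'a measure"
    and LR :: "nat \<Rightarrow> 'a \<Rightarrow> nat \<times> nat"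
    and xi :: "nat \<Rightarrow> nat \<Rightarrow> nat list \<Rightarrow> 'a \<Rightarrow> nat"
  assumes P: "prob_space M"
    and indep: "prob_space.indep_vars M (\<lambda>_. count_space UNIV)
        (\<lambda>i \<omega>. case i of Inl n \<Rightarrow> Inl (LR n \<omega>) | Inr (n, m, w) \<Rightarrow> Inr (xi n m w \<omega>))
        (Inl ` {1..} \<union> Inr ` ({1..} \<times> UNIV))"
    and law_LR: "\<And>n i j. n \<ge> 1 \<Longrightarrow>
        measure M {\<omega> \<in> space M. LR n \<omega> = (i, j)} = pmf mu (i + j + 1)"
    and law_xi: "\<And>n m w k. n \<ge> 1 \<Longrightarrow>
        measure M {\<omega> \<in> space M. xi n m w \<omega> = k} = pmf mu k"
begin

sublocale prob_space M by (rule P)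

definition XX :: "nat + nat \<times> nat \<times> nat list \<Rightarrow> 'a \<Rightarrow> (nat \<times> nat) + nat" where
  "XX = (\<lambda>i \<omega>. case i of Inl n \<Rightarrow> Inl (LR n \<omega>) | Inr (n, m, w) \<Rightarrow> Inr (xi n m w \<omega>))"

definition I0 :: "(nat + nat \<times> nat \<times> nat list) set" where
  "I0 = Inl ` {1..} \<union> Inr ` ({1..} \<times> UNIV)"

lemma indep': "indep_vars (\<lambda>_. count_space UNIV) XX I0"
  using indep unfolding XX_def I0_def .

lemma XX_meas: "i \<in> I0 \<Longrightarrow> XX i \<in> measurable M (count_space UNIV)"
  using indep' unfolding indep_vars_def by auto

lemma xi_meas: "1 \<le> i \<Longrightarrow> (\<lambda>\<omega>. xi i m w \<omega>) \<in> measurable M (count_space UNIV)"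
proof -
  assume i: "1 \<le> i"
  have "(\<lambda>\<omega>. projr (XX (Inr (i,m,w)) \<omega>)) \<in> measurable M (count_space UNIV)"
    by (rule measurable_compose[OF XX_meas]) (use i in \<open>auto simp: I0_def\<close>)
  then show ?thesis by (simp add: XX_def)
qed

lemma LR_meas: "1 \<le> i \<Longrightarrow> (\<lambda>\<omega>. LR i \<omega>) \<in> measurable M (count_space UNIV)"
proof -
  assume i: "1 \<le> i"
  have "(\<lambda>\<omega>. projl (XX (Inl i) \<omega>)) \<in> measurable M (count_space UNIV)"
    by (rule measurable_compose[OF XX_meas]) (use i in \<open>auto simp: I0_def\<close>)
  then show ?thesis by (simp add: XX_def)
qed

lemma ev_of: "g \<in> measurable M (count_space UNIV) \<Longrightarrow> {\<omega>\<in>space M. Q (g \<omega>)} \<in> events"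
proof -
  assume g: "g \<in> measurable M (count_space UNIV)"
  have "{\<omega>\<in>space M. Q (g \<omega>)} = g -` {x. Q x} \<inter> space M" by auto
  then show ?thesis using measurable_sets[OF g, of "{x. Q x}"] by simp
qed

definition Pre :: "nat \<Rightarrow> nat list \<Rightarrow> (nat + nat \<times> nat \<times> nat list) set" where
  "Pre i w = Inr ` ({i} \<times> {0} \<times> {take j w |j. j < length w})"

lemma finite_Pre: "finite (Pre i w)"
proof -
  have "{take j w |j. j < length w} = (\<lambda>j. take j w) ` {..<length w}" by auto
  then show ?thesis unfolding Pre_def by simp
qed

lemma Pre_I0: "1 \<le> i \<Longrightarrow> Pre i w \<subseteq> I0"
  by (auto simp: Pre_def I0_def)

lemma inT_restrict:
  assumes "Pre i w \<subseteq> K"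
  shows "inT (\<lambda>u. projr (restrict (\<lambda>j. XX j \<omega>) K (Inr (i,0,u)))) w = inT (\<lambda>u. xi i 0 u \<omega>) w"
proof (rule inT_cong)
  fix j assume "j < length w"
  then have "Inr (i,0,take j w) \<in> Pre i w" unfolding Pre_def by blast
  then have "Inr (i,0,take j w) \<in> K" using assms by blast
  then show "projr (restrict (\<lambda>j. XX j \<omega>) K (Inr (i,0,take j w))) = xi i 0 (take j w) \<omega>"
    by (simp add: XX_def)
qed

definition Ein :: "nat \<Rightarrow> nat list \<Rightarrow> 'a set" where
  "Ein i w = {\<omega>\<in>space M. inT (\<lambda>u. xi i 0 u \<omega>) w}"
definition Efst :: "nat \<Rightarrow> 'a set" where
  "Efst i = {\<omega>\<in>space M. 1 \<le> fst (LR i \<omega>)}"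

lemma Ein_block: "Ein i w = {\<omega>\<in>space M. (\<lambda>f. inT (\<lambda>u. projr (f (Inr (i,0,u)))) w) (restrict (\<lambda>j. XX j \<omega>) (Pre i w))}"
  unfolding Ein_def using inT_restrict[of i w "Pre i w"] by simp

lemma Efst_block: "Efst i = {\<omega>\<in>space M. (\<lambda>f. 1 \<le> fst (projl (f (Inl i)))) (restrict (\<lambda>j. XX j \<omega>) {Inl i})}"
  unfolding Efst_def by (simp add: XX_def)

lemma Ein_sets: "1 \<le> i \<Longrightarrow> Ein i w \<in> events"
  unfolding Ein_block by (rule block_sets[OF indep' finite_Pre Pre_I0])

lemma Efst_sets: "1 \<le> i \<Longrightarrow> Efst i \<in> events"
  unfolding Efst_def by (rule ev_of[OF LR_meas])

lemma prob_le: "1 \<le> i \<Longrightarrow> prob {\<omega>\<in>space M. xi i 0 w \<omega> \<le> m} = (\<Sum>k\<le>m. pmf mu k)"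
proof (induction m)
  case 0
  then show ?case using law_xi[of i 0 w 0] by simp
next
  case (Suc m)
  have "{\<omega>\<in>space M. xi i 0 w \<omega> \<le> Suc m} = {\<omega>\<in>space M. xi i 0 w \<omega> \<le> m} \<union> {\<omega>\<in>space M. xi i 0 w \<omega> = Suc m}"
    by auto
  moreover have "prob ({\<omega>\<in>space M. xi i 0 w \<omega> \<le> m} \<union> {\<omega>\<in>space M. xi i 0 w \<omega> = Suc m}) =
      prob {\<omega>\<in>space M. xi i 0 w \<omega> \<le> m} + prob {\<omega>\<in>space M. xi i 0 w \<omega> = Suc m}"
    using Suc.prems by (intro finite_measure_Union ev_of[OF xi_meas]) auto
  ultimately have "prob {\<omega>\<in>space M. xi i 0 w \<omega> \<le> Suc m} =
      prob {\<omega>\<in>space M. xi i 0 w \<omega> \<le> m} + prob {\<omega>\<in>space M. xi i 0 w \<omega> = Suc m}"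
    by simp
  then show ?case using Suc law_xi[of i 0 w "Suc m"] by simp
qed

lemma prob_gt: "1 \<le> i \<Longrightarrow> prob {\<omega>\<in>space M. m < xi i 0 w \<omega>} = tl_mu mu m"
proof -
  assume i: "1 \<le> i"
  have "{\<omega>\<in>space M. m < xi i 0 w \<omega>} = space M - {\<omega>\<in>space M. xi i 0 w \<omega> \<le> m}" by auto
  then show ?thesis using i prob_compl[OF ev_of[OF xi_meas[OF i]], of "\<lambda>x. x \<le> m"]
    by (simp add: prob_le tl_mu_def)
qed

lemma prob_Ein: "1 \<le> i \<Longrightarrow> prob (Ein i w) = prod_list (map (tl_mu mu) w)"
proof (induction w rule: rev_induct)
  case Nil
  then show ?case by (simp add: Ein_def prob_space)
next
  case (snoc m w)
  let ?A = "Pre i w" and ?B = "{Inr (i,0,w)} :: (nat + nat \<times> nat \<times> nat list) set"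
  have disj: "?A \<inter> ?B = {}"
  proof -
    have "\<And>j. j < length w \<Longrightarrow> take j w \<noteq> w" by (metis length_take min.absorb4 nat_neq_iff)
    then show ?thesis by (auto simp: Pre_def) (metis length_take min.absorb4 nat_neq_iff)
  qed
  have BI: "?B \<subseteq> I0" using snoc.prems by (auto simp: I0_def)
  have e: "Ein i (w@[m]) = {\<omega>\<in>space M. (\<lambda>f. inT (\<lambda>u. projr (f (Inr (i,0,u)))) w) (restrict (\<lambda>j. XX j \<omega>) ?A)
            \<and> (\<lambda>f. m < projr (f (Inr (i,0,w)))) (restrict (\<lambda>j. XX j \<omega>) ?B)}"
    unfolding Ein_def using inT_restrict[of i w "Pre i w"] by (auto simp: inT_snoc XX_def)
  have e2: "{\<omega>\<in>space M. (\<lambda>f. m < projr (f (Inr (i,0,w)))) (restrict (\<lambda>j. XX j \<omega>) ?B)}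
        = {\<omega>\<in>space M. m < xi i 0 w \<omega>}" by (auto simp: XX_def)
  have 1: "prob {\<omega>\<in>space M. (\<lambda>f. inT (\<lambda>u. projr (f (Inr (i,0,u)))) w) (restrict (\<lambda>j. XX j \<omega>) ?A)
            \<and> (\<lambda>f. m < projr (f (Inr (i,0,w)))) (restrict (\<lambda>j. XX j \<omega>) ?B)} =
     prob {\<omega>\<in>space M. (\<lambda>f. inT (\<lambda>u. projr (f (Inr (i,0,u)))) w) (restrict (\<lambda>j. XX j \<omega>) ?A)} *
     prob {\<omega>\<in>space M. (\<lambda>f. m < projr (f (Inr (i,0,w)))) (restrict (\<lambda>j. XX j \<omega>) ?B)}"
    by (rule block_indep_prob[OF indep' finite_Pre _ disj Pre_I0[OF snoc.prems] BI]) simp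
  have "prob (Ein i (w@[m])) = prob (Ein i w) * prob {\<omega>\<in>space M. m < xi i 0 w \<omega>}"
    using 1 unfolding e[symmetric] Ein_block[symmetric] e2 .
  then show ?case using snoc by (simp add: prob_gt)
qed

lemma prob_Efst_Ein: "1 \<le> i \<Longrightarrow> prob (Efst i \<inter> Ein i w) = prob (Efst i) * prob (Ein i w)"
proof -
  assume i: "1 \<le> i"
  have disj: "{Inl i} \<inter> Pre i w = {}" by (auto simp: Pre_def)
  have BI: "{Inl i} \<subseteq> I0" using i by (auto simp: I0_def)
  have "Efst i \<inter> Ein i w = {\<omega>\<in>space M. (\<lambda>f. 1 \<le> fst (projl (f (Inl i)))) (restrict (\<lambda>j. XX j \<omega>) {Inl i})
     \<and> (\<lambda>f. inT (\<lambda>u. projr (f (Inr (i,0,u)))) w) (restrict (\<lambda>j. XX j \<omega>) (Pre i w))}"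
    unfolding Efst_block Ein_block by blast
  also have "prob \<dots> = prob (Efst i) * prob (Ein i w)"
    unfolding Efst_block Ein_block
    by (rule block_indep_prob[OF indep' _ finite_Pre disj BI Pre_I0[OF i]]) simp
  finally show ?thesis .
qed

lemma prob_Efst: "1 \<le> i \<Longrightarrow> 2 \<le> k0 \<Longrightarrow> pmf mu k0 \<le> prob (Efst i)"
proof -
  assume i: "1 \<le> i" and k0: "2 \<le> k0"
  have "pmf mu k0 = prob {\<omega>\<in>space M. LR i \<omega> = (1, k0 - 2)}"
  proof -
    have "Suc (Suc (k0 - 2)) = k0" using k0 by simp
    then show ?thesis using law_LR[OF i, of 1 "k0 - 2"] by simp
  qed
  also have "\<dots> \<le> prob (Efst i)"
    by (rule finite_measure_mono) (use Efst_sets[OF i] in \<open>auto simp: Efst_def\<close>)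
  finally show ?thesis .
qed

end



context spineloc begin

definition Yv :: "nat \<Rightarrow> nat \<Rightarrow> nat \<Rightarrow> 'a \<Rightarrow> real" where
  "Yv D B i \<omega> = real (Ydet D B (\<lambda>k. LR k \<omega>) (\<lambda>k m w. xi k m w \<omega>) i)"

lemma Yv_sum: "\<omega> \<in> space M \<Longrightarrow> Yv D B i \<omega> = (\<Sum>w\<in>Wall D B. indicator (Efst i \<inter> Ein i w) \<omega>)"
  by (simp add: Yv_def Ydet_def Efst_def Ein_def indicator_def sum.If_cases Int_def finite_Wall)

lemma Yv_exp: "1 \<le> i \<Longrightarrow> expectation (Yv D B i) = prob (Efst i) * (\<Sum>d\<le>D. mB mu B ^ d)"
proof -
  assume i: "1 \<le> i"
  have "expectation (Yv D B i) = expectation (\<lambda>\<omega>. \<Sum>w\<in>Wall D B. indicator (Efst i \<inter> Ein i w) \<omega>)"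
    by (rule Bochner_Integration.integral_cong) (auto simp: Yv_sum)
  also have "\<dots> = (\<Sum>w\<in>Wall D B. expectation (indicator (Efst i \<inter> Ein i w)))"
    by (subst Bochner_Integration.integral_sum)
       (auto intro!: integrable_const_bound[where B=1] borel_measurable_indicator Efst_sets[OF i] Ein_sets[OF i])
  also have "\<dots> = (\<Sum>w\<in>Wall D B. prob (Efst i) * prod_list (map (tl_mu mu) w))"
  proof (rule sum.cong[OF refl])
    fix w
    have "Efst i \<inter> Ein i w \<inter> space M = Efst i \<inter> Ein i w" by (auto simp: Efst_def)
    then show "expectation (indicator (Efst i \<inter> Ein i w)) = prob (Efst i) * prod_list (map (tl_mu mu) w)"
      using prob_Efst_Ein[OF i, of w] prob_Ein[OF i, of w] by simp
  qed
  also have "\<dots> = prob (Efst i) * (\<Sum>d\<le>D. mB mu B ^ d)"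
    by (simp add: sum_distrib_left[symmetric] sum_rho_all mB_def)
  finally show ?thesis .
qed

lemma Yv_bound: "0 \<le> Yv D B i \<omega> \<and> Yv D B i \<omega> \<le> real (card (Wall D B))"
proof -
  have "card {w\<in>Wall D B. inT (xi i 0) w} \<le> card (Wall D B)" for xi
    by (rule card_mono[OF finite_Wall]) auto
  then show ?thesis by (auto simp: Yv_def Ydet_def)
qed

definition Kb :: "nat \<Rightarrow> nat \<Rightarrow> nat \<Rightarrow> (nat + nat \<times> nat \<times> nat list) set" where
  "Kb D B j = insert (Inl j) (Inr ` ({j} \<times> {0} \<times> Wall D B))"

definition Gf :: "nat \<Rightarrow> nat \<Rightarrow> nat \<Rightarrow> (nat + nat \<times> nat \<times> nat list \<Rightarrow> (nat \<times> nat) + nat) \<Rightarrow> real" where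
  "Gf D B j f = real (if 1 \<le> fst (projl (f (Inl j))) then card {w\<in>Wall D B. inT (\<lambda>u. projr (f (Inr (j,0,u)))) w} else 0)"

lemma Gf_eq: "Gf D B j (restrict (\<lambda>i. XX i \<omega>) (Kb D B j)) = Yv D B j \<omega>"
proof -
  have "{w\<in>Wall D B. inT (\<lambda>u. projr (restrict (\<lambda>i. XX i \<omega>) (Kb D B j) (Inr (j,0,u)))) w}
        = {w\<in>Wall D B. inT (\<lambda>u. xi j 0 u \<omega>) w}"
  proof (rule Collect_cong)
    fix w
    show "(w \<in> Wall D B \<and> inT (\<lambda>u. projr (restrict (\<lambda>i. XX i \<omega>) (Kb D B j) (Inr (j,0,u)))) w) =
          (w \<in> Wall D B \<and> inT (\<lambda>u. xi j 0 u \<omega>) w)"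
    proof (cases "w \<in> Wall D B")
      case True
      then have "Pre j w \<subseteq> Kb D B j" using prefix_Wall[OF True] by (auto simp: Pre_def Kb_def)
      then show ?thesis using inT_restrict[of j w "Kb D B j" \<omega>] by simp
    qed simp
  qed
  moreover have "projl (restrict (\<lambda>i. XX i \<omega>) (Kb D B j) (Inl j)) = LR j \<omega>"
    by (simp add: Kb_def XX_def)
  ultimately show ?thesis by (simp add: Gf_def Yv_def Ydet_def)
qed

lemma Yv_indep:
  assumes L: "L \<subseteq> {1..}"
  shows "indep_vars (\<lambda>_. borel) (Yv D B) L"
proof -
  have KI: "\<And>j. j \<in> L \<Longrightarrow> Kb D B j \<subseteq> I0" using L by (auto simp: Kb_def I0_def)
  have disj: "disjoint_family_on (Kb D B) L" by (auto simp: disjoint_family_on_def Kb_def)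
  have fin: "\<And>j. finite (Kb D B j)" by (simp add: Kb_def finite_Wall)
  have "indep_vars (\<lambda>j. PiM (Kb D B j) (\<lambda>_. count_space UNIV)) (\<lambda>j \<omega>. restrict (\<lambda>i. XX i \<omega>) (Kb D B j)) L"
    by (rule indep_vars_restrict[OF indep' KI disj])
  then have "indep_vars (\<lambda>_. borel) (\<lambda>j \<omega>. Gf D B j (restrict (\<lambda>i. XX i \<omega>) (Kb D B j))) L"
    by (rule indep_vars_compose2) (rule PiM_count_measurable[OF fin], simp)
  then show ?thesis by (simp add: Gf_eq)
qed

end



context spineloc begin

theorem main:
  fixes r :: real
  assumes mean: "measure_pmf.expectation mu real = 1"
    and var_pos: "measure_pmf.variance mu real > 0"
    and r: "0 < r" "r < 1"
  shows "\<exists>C>0. \<exists>c>0. \<forall>n\<ge>1.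
     measure M {\<omega> \<in> space M.
        real (spine_count (\<lambda>k. LR k \<omega>) (\<lambda>k m w. xi k m w \<omega>) n) > r * real n}
     \<le> C * exp (- c * real n)"
proof -
  obtain k0 where k0: "2 \<le> k0" "0 < pmf mu k0" using mu_big[OF mean var_pos] by auto
  define q where "q = pmf mu k0"
  have q: "0 < q" using k0 by (simp add: q_def)
  define D where "D = nat \<lceil>4 / (r * q)\<rceil>"
  have D: "4 / (r * q) \<le> real D" unfolding D_def by (rule real_nat_ceiling_ge)
  have "(\<lambda>B. mB mu B ^ D) \<longlonglongrightarrow> 1 ^ D" by (rule tendsto_power[OF mB_lim[OF mean]])
  then have "eventually (\<lambda>B. 1/2 < mB mu B ^ D) sequentially"
    by (rule order_tendstoD(1)) simp
  then obtain B where mBD: "1/2 < mB mu B ^ D" by (meson eventually_sequentially order_refl)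
  have mB0: "0 \<le> mB mu B" unfolding mB_def by (intro sum_nonneg) (simp add: tl_mu_prob)
  have mB1: "mB mu B \<le> 1" by (rule mB_le1[OF mean])
  define S where "S = (\<Sum>d\<le>D. mB mu B ^ d)"
  have "(\<Sum>d\<le>D. (1/2::real)) \<le> S"
    unfolding S_def
  proof (rule sum_mono)
    fix d assume "d \<in> {..D}"
    then have "mB mu B ^ D \<le> mB mu B ^ d" by (intro power_decreasing mB0 mB1) auto
    then show "1/2 \<le> mB mu B ^ d" using mBD by simp
  qed
  then have S: "(real D + 1) / 2 \<le> S" by simp
  have qD: "4 / r \<le> q * real D"
    using D q r by (simp add: field_simps)
  have EY: "2 / r \<le> expectation (Yv D B i)" if i: "1 \<le> i" for i
  proof -
    have "q \<le> prob (Efst i)" unfolding q_def by (rule prob_Efst[OF i k0(1)])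
    then have "q * S \<le> prob (Efst i) * S"
      using S by (intro mult_right_mono) auto
    moreover have "2 / r \<le> q * S"
    proof -
      have "q * ((real D + 1) / 2) \<le> q * S" using S q by (intro mult_left_mono) auto
      moreover have "2 / r \<le> q * ((real D + 1) / 2)" using qD q by (simp add: field_simps)
      ultimately show ?thesis by linarith
    qed
    ultimately show ?thesis using Yv_exp[OF i, of D B] by (simp add: S_def)
  qed
  define b where "b = real (card (Wall D B))"
  have b1: "1 \<le> b"
  proof -
    have "card (Wall D B) \<noteq> 0" using finite_Wall[of D B] Nil_Wall[of D B] by auto
    then show ?thesis by (simp add: b_def)
  qed
  define c where "c = 1 / (2 * b^2)"
  have c: "0 < c" using b1 by (simp add: c_def)
  define n0 where "n0 = 8 / r"
  define C where "C = exp (c * n0)"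
  have C1: "1 \<le> C" using c r by (simp add: C_def n0_def)
  show ?thesis
  proof (rule exI[of _ C], intro conjI, simp add: C_def, rule exI[of _ c], intro conjI allI impI)
    show "0 < c" by (rule c)
    fix n :: nat assume n1: "1 \<le> n"
    let ?E = "{\<omega> \<in> space M. real (spine_count (\<lambda>k. LR k \<omega>) (\<lambda>k m w. xi k m w \<omega>) n) > r * real n}"
    show "measure M ?E \<le> C * exp (- c * real n)"
    proof (cases "real n < n0")
      case True
      have "1 \<le> C * exp (- c * real n)"
        using True c by (simp add: C_def flip: exp_add)
      then show ?thesis using prob_le_1[of ?E] by linarith
    next
      case False
      then have nn0: "8 / r \<le> real n" by (simp add: n0_def)
      then have rn8: "8 \<le> r * real n" using r by (simp add: field_simps)
      define K where "K = nat \<lfloor>r * real n\<rfloor>"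
      have Kle: "real K \<le> r * real n" unfolding K_def using rn8
        by (intro nat_floor_bounds) simp
      have Kge: "r * real n - 1 \<le> real K" unfolding K_def using rn8
        by (intro nat_floor_bounds) simp
      define I where "I = {1..K - 1}"
      define N where "N = K - 1"
      have cardI: "card I = N" by (simp add: I_def N_def)
      have K7: "7 \<le> K" using Kge rn8 by linarith
      have NK: "real N = real K - 1" using K7 by (simp add: N_def)
      have N1: "1 \<le> N" using K7 by (simp add: N_def)
      have "r * real n \<le> real n" using r by (intro mult_left_le_one_le) auto
      then have Nn: "real N \<le> real n" using NK Kle by linarith
      define \<mu> where "\<mu> = (\<Sum>i\<in>I. expectation (Yv D B i))"
      have \<mu>: "real N * (2 / r) \<le> \<mu>"
      proof -
        have "(\<Sum>i\<in>I. 2 / r) \<le> \<mu>" unfolding \<mu>_def by (rule sum_mono) (rule EY, simp add: I_def)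
        then show ?thesis using cardI by simp
      qed
      define \<epsilon> where "\<epsilon> = \<mu> - (real n - real K)"
      have N2: "real N * (2 / r) \<ge> 2 * real n - 4 / r"
      proof -
        have "real N \<ge> r * real n - 2" using NK Kge by linarith
        then have "real N * (2 / r) \<ge> (r * real n - 2) * (2 / r)" using r by (intro mult_right_mono) auto
        also have "(r * real n - 2) * (2 / r) = 2 * real n - 4 / r" using r by (simp add: field_simps)
        finally show ?thesis .
      qed
      have eps: "real n / 2 \<le> \<epsilon>"
      proof -
        have "4 / r \<le> real n / 2" using nn0 r by (simp add: field_simps)
        then show ?thesis using \<mu> N2 unfolding \<epsilon>_def by linarith
      qed
      have eps0: "0 \<le> \<epsilon>" using eps by simp
      interpret H: Hoeffding_ineq M I "Yv D B" "\<lambda>_. 0" "\<lambda>_. b" \<mu>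
      proof unfold_locales
        show "finite I" by (simp add: I_def)
        show "indep_vars (\<lambda>_. borel) (Yv D B) I" by (rule Yv_indep) (auto simp: I_def)
        show "AE x in M. Yv D B i x \<in> {0..b}" for i
          using Yv_bound[of D B i] by (simp add: b_def)
      qed (simp add: \<mu>_def)
      have sq: "(\<Sum>i\<in>I. (b - 0)\<^sup>2) = real N * b^2" using cardI by simp
      have sqpos: "(\<Sum>i\<in>I. (b - 0)\<^sup>2) > 0" unfolding sq using N1 b1 by simp
      have rv: "\<And>i. i \<in> I \<Longrightarrow> Yv D B i \<in> borel_measurable M"
        using H.random_variable by simp
      have sumrv: "(\<lambda>x. \<Sum>i\<in>I. Yv D B i x) \<in> borel_measurable M"
        by (rule borel_measurable_sum) (rule rv)
      have setB: "{x \<in> space M. (\<Sum>i\<in>I. Yv D B i x) \<le> \<mu> - \<epsilon>} \<in> events"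
        using sumrv by measurable
      have sub: "?E \<subseteq> {x \<in> space M. (\<Sum>i\<in>I. Yv D B i x) \<le> \<mu> - \<epsilon>}"
      proof
        fix \<omega> assume "\<omega> \<in> ?E"
        then have \<omega>: "\<omega> \<in> space M" "real (spine_count (\<lambda>k. LR k \<omega>) (\<lambda>k m w. xi k m w \<omega>) n) > r * real n"
          by auto
        have "real (\<Sum>i\<in>{1..nat\<lfloor>r*n\<rfloor> - 1}. Ydet D B (\<lambda>k. LR k \<omega>) (\<lambda>k m w. xi k m w \<omega>) i)
               \<le> real n - real (nat \<lfloor>r*n\<rfloor>)"
          by (rule det[OF \<omega>(2)]) (use r in simp)
        then have "(\<Sum>i\<in>I. Yv D B i \<omega>) \<le> real n - real K"
          by (simp add: Yv_def I_def K_def)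
        then show "\<omega> \<in> {x \<in> space M. (\<Sum>i\<in>I. Yv D B i x) \<le> \<mu> - \<epsilon>}"
          using \<omega>(1) by (simp add: \<epsilon>_def)
      qed
      have "measure M ?E \<le> prob {x \<in> space M. (\<Sum>i\<in>I. Yv D B i x) \<le> \<mu> - \<epsilon>}"
        by (rule finite_measure_mono[OF sub setB])
      also have "\<dots> \<le> exp (-2 * \<epsilon>\<^sup>2 / (\<Sum>i\<in>I. (b - 0)\<^sup>2))"
        by (rule H.Hoeffding_ineq_le[OF eps0 sqpos])
      also have "\<dots> \<le> exp (- c * real n)"
      proof -
        have n0': "0 < real n" using n1 by simp
        have "(real n / 2)^2 \<le> \<epsilon>^2" using eps n0' by (intro power_mono) auto
        then have e2: "real n * real n / 4 \<le> \<epsilon>^2" by (simp add: power2_eq_square)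
        have "c * real n = real n / (2 * b^2)" by (simp add: c_def)
        also have "\<dots> = 2 * (real n * real n / 4) / (real n * b^2)" using n0' by (simp add: field_simps)
        also have "\<dots> \<le> 2 * \<epsilon>^2 / (real n * b^2)"
          using e2 n0' b1 by (intro divide_right_mono) auto
        also have "\<dots> \<le> 2 * \<epsilon>^2 / (real N * b^2)"
          using Nn N1 b1 by (intro divide_left_mono mult_right_mono) auto
        finally have "c * real n \<le> 2 * \<epsilon>^2 / (real N * b^2)" .
        then show ?thesis unfolding sq by simp
      qed
      also have "\<dots> \<le> C * exp (- c * real n)" using C1 by simp
      finally show ?thesis .
    qed
  qed
qed

end

theorem lemma3p1:
  fixes mu :: "nat pmf"
    and M :: "'a measure"
    and LR :: "nat \<Rightarrow> 'a \<Rightarrow> nat \<times> nat"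
    and xi :: "nat \<Rightarrow> nat \<Rightarrow> nat list \<Rightarrow> 'a \<Rightarrow> nat"
    and r :: real
  assumes mean: "measure_pmf.expectation mu real = 1"
    and var_fin: "integrable (measure_pmf mu) (\<lambda>k. (real k)^2)"
    and var_pos: "measure_pmf.variance mu real > 0"
    and P: "prob_space M"
    and indep: "prob_space.indep_vars M (\<lambda>_. count_space UNIV)
        (\<lambda>i \<omega>. case i of Inl n \<Rightarrow> Inl (LR n \<omega>) | Inr (n, m, w) \<Rightarrow> Inr (xi n m w \<omega>))
        (Inl ` {1..} \<union> Inr ` ({1..} \<times> UNIV))"
    and law_LR: "\<And>n i j. n \<ge> 1 \<Longrightarrow>
        measure M {\<omega> \<in> space M. LR n \<omega> = (i, j)} = pmf mu (i + j + 1)"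
    and law_xi: "\<And>n m w k. n \<ge> 1 \<Longrightarrow>
        measure M {\<omega> \<in> space M. xi n m w \<omega> = k} = pmf mu k"
    and r: "0 < r" "r < 1"
  shows "\<exists>C>0. \<exists>c>0. \<forall>n\<ge>1.
     measure M {\<omega> \<in> space M.
        real (spine_count (\<lambda>k. LR k \<omega>) (\<lambda>k m w. xi k m w \<omega>) n) > r * real n}
     \<le> C * exp (- c * real n)"
proof -
  interpret spineloc mu M LR xi
    by (rule spineloc.intro[OF P indep law_LR law_xi])
  show ?thesis by (rule main[OF mean var_pos r])
qed

end
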